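(* Let $M$ be a binary matroid and let $d=\dim P(M)$. If the base graph $G(M)$ has a vertex with exactly $d$ neighbours, then $P(M)$ is indecomposable.
   Context: A matroid is binary if it is representable over $\mathbb{F}_2$. For a matroid $N$ on $E=\{1,\dots,n\}$, $P(N)=\mathrm{conv}\{\sum_{i\in B}e_i : B \text{ a base of } N\}\subset\mathbb{R}^n$. The base graph $G(M)$ has the bases of $M$ as vertices, two bases adjacent iff their symmetric difference has exactly two elements (it is the 1-skeleton of $P(M)$). A matroid base polytope decomposition of $P(M)$ is an expression $P(M)=\bigcup_{i=1}^t P(M_i)$ with each $M_i$ a matroid on $E$ and $P(M_i)\cap P(M_j)$ a face of both $P(M_i)$ and $P(M_j)$ for all $i\neq j$. $P(M)$ is decomposable if it has such a decomposition with $t\ge 2$ and every $P(M_i)\neq P(M)$, and indecomposable otherwise. *)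

theory Defs
  imports "HOL-Analysis.Analysis" "HOL-Library.Z2"
begin

text \<open>A matroid on the finite ground set UNIV of a finite type 'n, given by its
  family of bases (base axioms: nonempty family, basis exchange).\<close>
definition matroid_bases :: "('n::finite) set set \<Rightarrow> bool" where
  "matroid_bases \<B> \<longleftrightarrow> \<B> \<noteq> {} \<and>
     (\<forall>B1\<in>\<B>. \<forall>B2\<in>\<B>. \<forall>x\<in>B1 - B2. \<exists>y\<in>B2 - B1. insert y (B1 - {x}) \<in> \<B>)"

definition indep_F2 :: "('n \<Rightarrow> nat \<Rightarrow> bit) \<Rightarrow> 'n set \<Rightarrow> bool" where
  "indep_F2 v I \<longleftrightarrow>
     (\<forall>c :: 'n \<Rightarrow> bit. (\<forall>k. (\<Sum>i\<in>I. c i * v i k) = 0) \<longrightarrow> (\<forall>i\<in>I. c i = 0))"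

definition binary_matroid :: "('n::finite) set set \<Rightarrow> bool" where
  "binary_matroid \<B> \<longleftrightarrow> matroid_bases \<B> \<and>
     (\<exists>v :: 'n \<Rightarrow> nat \<Rightarrow> bit. \<forall>B. B \<in> \<B> \<longleftrightarrow>
        (indep_F2 v B \<and> (\<forall>J. B \<subset> J \<longrightarrow> \<not> indep_F2 v J)))"

definition indicator_vec :: "('n::finite) set \<Rightarrow> real ^ 'n" where
  "indicator_vec B = (\<chi> i. if i \<in> B then 1 else 0)"

definition base_polytope :: "('n::finite) set set \<Rightarrow> (real ^ 'n) set" where
  "base_polytope \<B> = convex hull (indicator_vec ` \<B>)"

definition base_graph_nbrs :: "('n::finite) set set \<Rightarrow> 'n set \<Rightarrow> 'n set set" where
  "base_graph_nbrs \<B> B = {B' \<in> \<B>. card ((B - B') \<union> (B' - B)) = 2}"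

definition is_mbp_decomposition :: "('n::finite) set set \<Rightarrow> nat \<Rightarrow> (nat \<Rightarrow> 'n set set) \<Rightarrow> bool" where
  "is_mbp_decomposition \<B> t Ms \<longleftrightarrow>
     (\<forall>i<t. matroid_bases (Ms i)) \<and>
     base_polytope \<B> = (\<Union>i<t. base_polytope (Ms i)) \<and>
     (\<forall>i<t. \<forall>j<t. i \<noteq> j \<longrightarrow>
        (base_polytope (Ms i) \<inter> base_polytope (Ms j)) face_of base_polytope (Ms i) \<and>
        (base_polytope (Ms i) \<inter> base_polytope (Ms j)) face_of base_polytope (Ms j))"

definition decomposable :: "('n::finite) set set \<Rightarrow> bool" where
  "decomposable \<B> \<longleftrightarrow> (\<exists>t Ms. t \<ge> 2 \<and> is_mbp_decomposition \<B> t Ms \<and>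
     (\<forall>i<t. base_polytope (Ms i) \<noteq> base_polytope \<B>))"

end

theory Submission
  imports Defs "HOL-Library.Function_Algebras"
begin


definition sc :: "bit \<Rightarrow> (nat \<Rightarrow> bit) \<Rightarrow> (nat \<Rightarrow> bit)" where
  "sc c f = (\<lambda>k. c * f k)"

interpretation F2: vector_space sc
  by unfold_locales (auto simp: sc_def fun_eq_iff algebra_simps)

lemma sum_fun_apply: "(sum f I :: nat \<Rightarrow> bit) k = (\<Sum>i\<in>I. f i k)"
  by (induction I rule: infinite_finite_induct) auto

lemma bit_add_self[simp]: "(a::bit) + a = 0"
  by (cases a) auto

lemma indep_F2_iff:
  fixes v :: "'n::finite \<Rightarrow> nat \<Rightarrow> bit"
  shows "indep_F2 v I \<longleftrightarrow> inj_on v I \<and> F2.independent (v ` I)"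
proof
  assume ind: "indep_F2 v I"
  have inj: "inj_on v I"
  proof (rule inj_onI, rule ccontr)
    fix i j assume ij: "i \<in> I" "j \<in> I" "v i = v j" "i \<noteq> j"
    define c where "c = (\<lambda>l. if l = i \<or> l = j then (1::bit) else 0)"
    have "(\<Sum>l\<in>I. c l * v l k) = 0" for k
    proof -
      have "(\<Sum>l\<in>I. c l * v l k) = (\<Sum>l\<in>{i,j}. c l * v l k)"
        by (rule sum.mono_neutral_right) (use ij in \<open>auto simp: c_def\<close>)
      also have "\<dots> = c i * v i k + (\<Sum>l\<in>{j}. c l * v l k)"
        by (rule sum.insert) (use ij(4) in auto)
      also have "\<dots> = c i * v i k + c j * v j k" by (simp only: sum.insert_if finite.emptyI empty_iff if_False sum.empty add_0_right)
      also have "\<dots> = 0" using ij(3) by (simp only: c_def if_True simp_thms mult_1 bit_add_self)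
      finally show ?thesis .
    qed
    hence "c i = 0" using ind ij(1) unfolding indep_F2_def by blast
    thus False by (simp add: c_def)
  qed
  have "\<not> F2.dependent (v ` I)"
  proof
    assume "F2.dependent (v ` I)"
    then obtain u where u: "\<exists>w\<in>v ` I. u w \<noteq> 0" "(\<Sum>w\<in>v ` I. sc (u w) w) = 0"
      using F2.dependent_finite[of "v ` I"] by auto
    have "(\<Sum>i\<in>I. sc (u (v i)) (v i)) = 0"
      using u(2) by (simp add: sum.reindex[OF inj])
    hence "(\<Sum>i\<in>I. u (v i) * v i k) = 0" for k
      using sum_fun_apply[of "\<lambda>i. sc (u (v i)) (v i)" I k] by (simp add: sc_def)
    hence "\<forall>i\<in>I. u (v i) = 0" using ind[unfolded indep_F2_def, rule_format, of "\<lambda>i. u (v i)"] by blast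
    with u(1) show False by auto
  qed
  with inj show "inj_on v I \<and> F2.independent (v ` I)" by blast
next
  assume h: "inj_on v I \<and> F2.independent (v ` I)"
  show "indep_F2 v I" unfolding indep_F2_def
  proof (intro allI impI ballI)
    fix c :: "'n \<Rightarrow> bit" and i
    assume s: "\<forall>k. (\<Sum>i\<in>I. c i * v i k) = 0" and i: "i \<in> I"
    define u where "u = (\<lambda>w. c (the_inv_into I v w))"
    have "(\<Sum>w\<in>v ` I. sc (u w) w) = (\<Sum>i\<in>I. sc (c i) (v i))"
      using h by (simp add: sum.reindex u_def the_inv_into_f_f)
    also have "\<dots> = 0"
      using s by (simp add: fun_eq_iff sum_fun_apply sc_def)
    finally have "\<forall>w\<in>v ` I. u w = 0"
      using h F2.dependent_finite[of "v ` I"] by auto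
    with i h show "c i = 0" by (auto simp: u_def the_inv_into_f_f)
  qed
qed




lemma card_swap:
  assumes "x \<in> B" "y \<notin> B"
  shows "card (insert y (B - {x})) = card (B::('n::finite) set)"
proof -
  have "card (insert y (B - {x})) = Suc (card (B - {x}))" using assms by simp
  also have "\<dots> = card B"
  proof -
    have "card B \<noteq> 0" using assms(1) by auto
    moreover have "card (B - {x}) = card B - 1" using assms(1) by (simp add: card_Diff_singleton)
    ultimately show ?thesis by arith
  qed
  finally show ?thesis .
qed

lemma mb_card_eq:
  assumes M: "matroid_bases \<B>" and b2: "B2 \<in> \<B>"
  shows "B1 \<in> \<B> \<Longrightarrow> card B1 = card (B2::('n::finite) set)"
proof (induction "card (B1 - B2)" arbitrary: B1)
  case 0
  hence sub: "B1 \<subseteq> B2" by auto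
  have "B2 \<subseteq> B1"
  proof
    fix x assume x: "x \<in> B2"
    show "x \<in> B1"
    proof (rule ccontr)
      assume "x \<notin> B1"
      with M b2 \<open>B1 \<in> \<B>\<close> x obtain y where "y \<in> B1 - B2" unfolding matroid_bases_def by blast
      with sub show False by auto
    qed
  qed
  with sub show ?case by simp
next
  case (Suc n)
  have "B1 - B2 \<noteq> {}" using Suc.hyps(2) by (metis card.empty Zero_not_Suc)
  then obtain x where x: "x \<in> B1 - B2" by blast
  then obtain y where y: "y \<in> B2 - B1" and b: "insert y (B1 - {x}) \<in> \<B>"
    using M b2 Suc.prems unfolding matroid_bases_def by blast
  have e: "insert y (B1 - {x}) - B2 = (B1 - B2) - {x}" using y by auto
  have "card (insert y (B1 - {x}) - B2) = n" using Suc.hyps(2) x by (simp add: e)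
  from Suc.hyps(1)[OF this[symmetric] b]
  have "card (insert y (B1 - {x})) = card B2" .
  moreover have "card (insert y (B1 - {x})) = card B1" using x y by (intro card_swap) auto
  ultimately show ?case by simp
qed

lemma indep_mono: "indep_F2 v I \<Longrightarrow> J \<subseteq> I \<Longrightarrow> indep_F2 v (J::('n::finite) set)"
  unfolding indep_F2_iff by (meson F2.independent_mono image_mono inj_on_subset)

locale bm =
  fixes \<B> :: "('n::finite) set set" and v :: "'n \<Rightarrow> nat \<Rightarrow> bit"
  assumes mb: "matroid_bases \<B>"
    and rep: "\<And>B. B \<in> \<B> \<longleftrightarrow> indep_F2 v B \<and> (\<forall>J. B \<subset> J \<longrightarrow> \<not> indep_F2 v J)"
begin

lemma base_indep: "B \<in> \<B> \<Longrightarrow> indep_F2 v B" using rep by blast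

lemma ext: assumes "indep_F2 v J" shows "\<exists>J'. J \<subseteq> J' \<and> J' \<in> \<B>"
proof -
  let ?A = "{J'. J \<subseteq> J' \<and> indep_F2 v J'}"
  have "finite ?A" by simp
  moreover have "?A \<noteq> {}" using assms by blast
  ultimately obtain m where m: "m \<in> ?A" and mx: "\<forall>b\<in>?A. m \<le> b \<longrightarrow> m = b"
    using finite_has_maximal[of ?A] by blast
  have "m \<in> \<B>"
    unfolding rep
  proof (intro conjI allI impI)
    show "indep_F2 v m" using m by simp
  next
    fix K assume "m \<subset> K"
    thus "\<not> indep_F2 v K" using mx m by auto
  qed
  with m show ?thesis by blast
qed

lemma indep_le: assumes "indep_F2 v J" "B \<in> \<B>" shows "card J \<le> card B"
proof -
  obtain J' where "J \<subseteq> J'" "J' \<in> \<B>" using ext assms(1) by blast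
  thus ?thesis using mb_card_eq[OF mb assms(2)] card_mono[of J' J] by simp
qed

lemma indep_card_base: assumes "indep_F2 v J" "B \<in> \<B>" "card J = card B" shows "J \<in> \<B>"
  unfolding rep
proof (intro conjI allI impI)
  show "indep_F2 v J" by fact
next
  fix K assume "J \<subset> K"
  hence "card J < card K" by (simp add: psubset_card_mono)
  thus "\<not> indep_F2 v K" using indep_le[of K B] assms by auto
qed

lemma in_span_base: assumes "B \<in> \<B>" shows "v z \<in> F2.span (v ` B)"
proof (cases "z \<in> B")
  case True thus ?thesis by (simp add: F2.span_base)
next
  case False
  have "B \<subset> insert z B" using False by auto
  hence ni: "\<not> indep_F2 v (insert z B)" using rep assms by blast
  have bi: "inj_on v B" "F2.independent (v ` B)" using base_indep[OF assms] indep_F2_iff by auto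
  show ?thesis
  proof (cases "v z \<in> v ` B")
    case True thus ?thesis by (simp add: F2.span_base)
  next
    case nv: False
    have "inj_on v (insert z B)" using bi(1) nv by (simp, blast)
    with ni have "\<not> F2.independent (v ` insert z B)" using indep_F2_iff by blast
    hence "\<not> F2.independent (insert (v z) (v ` B))" by simp
    with bi(2) nv show ?thesis using F2.independent_insert by auto
  qed
qed

lemma span_bound:
  assumes "indep_F2 v I" "\<And>i. i \<in> I \<Longrightarrow> v i \<in> F2.span (v ` S)"
  shows "card I \<le> card S"
proof -
  have h: "inj_on v I" "F2.independent (v ` I)" using assms(1) indep_F2_iff by auto
  have "card (v ` I) \<le> card (v ` S)"
    using F2.independent_span_bound[of "v ` S" "v ` I"] h assms(2) by auto
  also have "\<dots> \<le> card S" by (rule card_image_le) simp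
  finally show ?thesis using card_image[OF h(1)] by simp
qed

lemma R1:
  assumes B: "B \<in> \<B>" and z: "z \<notin> B"
  shows "v z \<in> F2.span (v ` {x\<in>B. insert z (B - {x}) \<in> \<B>})"
proof -
  have bi: "inj_on v B" "F2.independent (v ` B)" using base_indep[OF B] indep_F2_iff by auto
  obtain u where u: "v z = (\<Sum>w\<in>v ` B. sc (u w) w)"
    using in_span_base[OF B, of z] F2.span_finite[of "v ` B"] by auto
  define c where "c = (\<lambda>x. u (v x))"
  have vz: "v z = (\<Sum>x\<in>B. sc (c x) (v x))"
    using u by (simp add: sum.reindex[OF bi(1)] c_def)
  have key: "insert z (B - {x}) \<in> \<B>" if x: "x \<in> B" "c x \<noteq> 0" for x
  proof -
    have cx: "c x = 1" using x by simp
    let ?S = "(\<Sum>b\<in>B - {x}. sc (c b) (v b))"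
    have Ssp: "?S \<in> F2.span (v ` (B - {x}))"
      by (intro F2.span_sum F2.span_scale F2.span_base) auto
    have "v z = sc (c x) (v x) + ?S" using vz sum.remove[of B x "\<lambda>b. sc (c b) (v b)"] x(1) by simp
    hence vz2: "v z = v x + ?S" using cx by simp
    have nsp: "v z \<notin> F2.span (v ` (B - {x}))"
    proof
      assume a0: "v z \<in> F2.span (v ` (B - {x}))"
      have a1: "v z - ?S \<in> F2.span (v ` (B - {x}))" by (rule F2.span_diff[OF a0 Ssp])
      have "v x = v z - ?S" using vz2 by (metis add_diff_cancel_right')
      hence a: "v x \<in> F2.span (v ` (B - {x}))" using a1 by (simp only:)
      have b: "v x \<notin> v ` (B - {x})"
      proof
        assume "v x \<in> v ` (B - {x})"
        then obtain b where b: "b \<in> B - {x}" "v x = v b" by blast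
        hence "x = b" using inj_onD[OF bi(1)] x(1) by blast
        thus False using b by blast
      qed
      have c: "v ` B = insert (v x) (v ` (B - {x}))" by (metis image_insert insert_Diff x(1))
      have "F2.independent (insert (v x) (v ` (B - {x})))" using bi(2) by (simp only: c simp_thms)
      hence "F2.independent (v ` (B - {x})) \<and> v x \<notin> F2.span (v ` (B - {x}))"
        using F2.independent_insert[of "v x" "v ` (B - {x})"] b by (simp only: if_False simp_thms)
      thus False using a by blast
    qed
    have ind: "F2.independent (v ` (B - {x}))" by (rule F2.independent_mono[OF bi(2)]) auto
    have nvz: "v z \<notin> v ` (B - {x})" using nsp F2.span_base[of "v z" "v ` (B - {x})"] by blast
    have "indep_F2 v (insert z (B - {x}))"
      unfolding indep_F2_iff
    proof
      have "inj_on v (B - {x})" by (rule inj_on_subset[OF bi(1)]) auto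
      thus "inj_on v (insert z (B - {x}))" unfolding inj_on_insert using nvz by blast
      show "F2.independent (v ` insert z (B - {x}))"
        using F2.independent_insertI[OF nsp ind] by simp
    qed
    moreover have "card (insert z (B - {x})) = card B" using x z by (intro card_swap) auto
    ultimately show ?thesis using indep_card_base B by blast
  qed
  show ?thesis unfolding vz
  proof (intro F2.span_sum)
    fix x assume x: "x \<in> B"
    show "sc (c x) (v x) \<in> F2.span (v ` {x\<in>B. insert z (B - {x}) \<in> \<B>})"
    proof (cases "c x = 0")
      case True thus ?thesis by (simp add: F2.span_zero)
    next
      case False thus ?thesis using key x by (intro F2.span_scale F2.span_base) auto
    qed
  qed
qed

end



definition dl :: "'n::finite \<Rightarrow> 'n \<Rightarrow> real ^ 'n" where
  "dl x y = indicator_vec {y} - indicator_vec {x}"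

lemma ind_swap:
  assumes "x \<in> B" "y \<notin> B"
  shows "indicator_vec (insert y (B - {x})) = indicator_vec B + dl x y"
  using assms by (auto simp: vec_eq_iff indicator_vec_def dl_def)

lemma dl_nth: "x \<noteq> y \<Longrightarrow> dl x y $ i = (if i = y then 1 else if i = x then -1 else 0)"
  by (auto simp: dl_def indicator_vec_def)

lemma dl_inj: "x \<noteq> y \<Longrightarrow> x' \<noteq> y' \<Longrightarrow> dl x y = dl x' y' \<Longrightarrow> x = x' \<and> y = y'"
proof -
  assume h: "x \<noteq> y" "x' \<noteq> y'" "dl x y = dl x' y'"
  have "dl x y $ y = 1" using h(1) by (simp add: dl_nth)
  hence "dl x' y' $ y = 1" using h(3) by simp
  hence "y = y'" by (simp add: dl_nth[OF h(2)] split: if_splits)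
  moreover have "dl x y $ x = -1" using h(1) by (simp add: dl_nth)
  hence "dl x' y' $ x = -1" using h(3) by simp
  hence "x = x'" by (simp add: dl_nth[OF h(2)] split: if_splits)
  ultimately show ?thesis by simp
qed

lemma inner_ind: "f \<bullet> indicator_vec S = (\<Sum>i\<in>S. f $ i)"
proof -
  have "f \<bullet> indicator_vec S = (\<Sum>i\<in>UNIV. if i \<in> S then f $ i else 0)"
    by (simp add: inner_vec_def indicator_vec_def if_distrib cong: if_cong)
  also have "\<dots> = (\<Sum>i\<in>S. f $ i)" by (simp add: sum.If_cases)
  finally show ?thesis .
qed

lemma inner_dl: "x \<noteq> y \<Longrightarrow> f \<bullet> dl x y = f $ y - f $ x"
  by (simp add: dl_def inner_diff_right inner_ind)

lemma ind_in_hull: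
  assumes "indicator_vec B \<in> convex hull (indicator_vec ` F)"
  shows "B \<in> (F::('n::finite) set set)"
proof (rule ccontr)
  assume nB: "B \<notin> F"
  define w :: "real ^ 'n" where "w = (\<chi> i. if i \<in> B then 1 else -1)"
  have val: "w \<bullet> indicator_vec B' = real (card (B' \<inter> B)) - real (card (B' - B))" for B'
  proof -
    have "w \<bullet> indicator_vec B' = (\<Sum>i\<in>B'. w $ i)" by (rule inner_ind)
    also have "\<dots> = (\<Sum>i\<in>B' \<inter> B. w $ i) + (\<Sum>i\<in>B' - B. w $ i)"
      by (rule sum.Int_Diff) simp
    also have "\<dots> = real (card (B' \<inter> B)) - real (card (B' - B))"
      by (simp add: w_def)
    finally show ?thesis .
  qed
  have lt: "w \<bullet> y < real (card B)" if yF: "y \<in> indicator_vec ` F" for y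
  proof -
    obtain B' where B': "B' \<in> F" "y = indicator_vec B'" using yF by blast
    have "B' \<noteq> B" using B' nB by auto
    hence "B' - B \<noteq> {} \<or> B' \<inter> B \<subset> B" by auto
    moreover have "card (B' \<inter> B) \<le> card B" by (simp add: card_mono)
    moreover have "B' \<inter> B \<subset> B \<Longrightarrow> card (B' \<inter> B) < card B" by (simp add: psubset_card_mono)
    moreover have "B' - B \<noteq> {} \<Longrightarrow> card (B' - B) > 0" by auto
    ultimately show ?thesis using B'(2) val by fastforce
  qed
  have "convex hull (indicator_vec ` F) \<subseteq> {y. w \<bullet> y < real (card B)}"
    by (rule hull_minimal) (use lt convex_halfspace_lt in auto)
  hence "w \<bullet> indicator_vec B < real (card B)" using assms by auto
  thus False using val[of B] by simp
qed




lemma card_diff_eq: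
  assumes "card A = card (B::('n::finite) set)"
  shows "card (A - B) = card (B - A)"
proof -
  have "card (A - B) = card A - card (A \<inter> B)" by (simp add: card_Diff_subset_Int)
  moreover have "card (B - A) = card B - card (B \<inter> A)" by (simp add: card_Diff_subset_Int)
  ultimately show ?thesis using assms by (simp add: Int_commute)
qed

locale ctx = bm +
  fixes B0
  assumes B0: "B0 \<in> \<B>"
    and deg: "int (card (base_graph_nbrs \<B> B0)) = aff_dim (base_polytope \<B>)"
begin

definition E where "E = {(x,y). x \<in> B0 \<and> y \<notin> B0 \<and> insert y (B0 - {x}) \<in> \<B>}"
definition D where "D = (\<lambda>(x,y). dl x y) ` E"

lemma card_base: "B \<in> \<B> \<Longrightarrow> card B = card B0"
  using mb_card_eq[OF mb B0] by blast

lemma E_card: "card (base_graph_nbrs \<B> B0) = card E"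
proof -
  have eq: "base_graph_nbrs \<B> B0 = (\<lambda>(x,y). insert y (B0 - {x})) ` E"
  proof
    show "(\<lambda>(x,y). insert y (B0 - {x})) ` E \<subseteq> base_graph_nbrs \<B> B0"
    proof
      fix B assume "B \<in> (\<lambda>(x,y). insert y (B0 - {x})) ` E"
      then obtain x y where xy: "x \<in> B0" "y \<notin> B0" "insert y (B0 - {x}) \<in> \<B>" "B = insert y (B0 - {x})"
        unfolding E_def by auto
      have "(B0 - B) \<union> (B - B0) = {x, y}" unfolding xy(4) using xy(1,2) by auto
      moreover have "x \<noteq> y" using xy(1,2) by auto
      ultimately have "card ((B0 - B) \<union> (B - B0)) = 2" by simp
      thus "B \<in> base_graph_nbrs \<B> B0" using xy(3,4) unfolding base_graph_nbrs_def by simp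
    qed
  next
    show "base_graph_nbrs \<B> B0 \<subseteq> (\<lambda>(x,y). insert y (B0 - {x})) ` E"
    proof
      fix B assume "B \<in> base_graph_nbrs \<B> B0"
      hence B: "B \<in> \<B>" "card ((B0 - B) \<union> (B - B0)) = 2" unfolding base_graph_nbrs_def by auto
      have c: "card (B0 - B) = card (B - B0)" using card_diff_eq[OF card_base[OF B(1)]] by simp
      have "card ((B0 - B) \<union> (B - B0)) = card (B0 - B) + card (B - B0)"
        by (rule card_Un_disjoint) auto
      hence "card (B0 - B) = 1" "card (B - B0) = 1" using B(2) c by auto
      then obtain x y where x: "B0 - B = {x}" and y: "B - B0 = {y}" by (metis card_1_singletonE)
      have Beq: "B = insert y (B0 - {x})"
      proof (rule set_eqI)
        fix z
        have "z \<in> B0 - B \<longleftrightarrow> z = x" "z \<in> B - B0 \<longleftrightarrow> z = y" using x y by auto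
        thus "z \<in> B \<longleftrightarrow> z \<in> insert y (B0 - {x})" by auto
      qed
      have xy: "x \<in> B0" "y \<notin> B0" using x y by auto
      have "(x,y) \<in> E" unfolding E_def using xy B(1) Beq by simp
      thus "B \<in> (\<lambda>(x,y). insert y (B0 - {x})) ` E"
        by (rule image_eqI[rotated]) (simp add: Beq)
    qed
  qed
  have "inj_on (\<lambda>(x,y). insert y (B0 - {x})) E"
  proof (rule inj_onI, clarsimp simp: E_def)
    fix x y x' y'
    assume h: "x \<in> B0" "y \<notin> B0" "x' \<in> B0" "y' \<notin> B0" "insert y (B0 - {x}) = insert y' (B0 - {x'})"
    have "x = x'"
    proof (rule ccontr)
      assume "x \<noteq> x'"
      hence "x' \<in> insert y (B0 - {x})" using h(3) by auto
      hence "x' \<in> insert y' (B0 - {x'})" using h(5) by simp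
      thus False using h by auto
    qed
    moreover have "y \<in> insert y' (B0 - {x'})" using h(5) by auto
    ultimately show "x = x' \<and> y = y'" using h(2) by auto
  qed
  thus ?thesis by (simp add: eq card_image)
qed

lemma E_ne: "(x,y) \<in> E \<Longrightarrow> x \<noteq> y" unfolding E_def by auto

lemma dl_inj_E: "inj_on (\<lambda>(x,y). dl x y) E"
proof (rule inj_onI)
  fix a b assume a: "a \<in> E" and b: "b \<in> E" and e: "(\<lambda>(x,y). dl x y) a = (\<lambda>(x,y). dl x y) b"
  obtain x y where xy: "a = (x,y)" by (cases a)
  obtain x' y' where xy': "b = (x',y')" by (cases b)
  have "dl x y = dl x' y'" using e xy xy' by simp
  hence "x = x' \<and> y = y'" using dl_inj E_ne a b xy xy' by metis
  thus "a = b" using xy xy' by simp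
qed

lemma card_D: "card D = card E" unfolding D_def using dl_inj_E by (simp add: card_image)

lemma closed_le:
  assumes K: "\<And>x y. (x,y) \<in> E \<Longrightarrow> y \<in> K \<Longrightarrow> x \<in> K" and B: "B \<in> \<B>"
  shows "card (B \<inter> K) \<le> card (B0 \<inter> K)"
proof (rule span_bound)
  show "indep_F2 v (B \<inter> K)" using base_indep[OF B] indep_mono by blast
next
  fix i assume i: "i \<in> B \<inter> K"
  show "v i \<in> F2.span (v ` (B0 \<inter> K))"
  proof (cases "i \<in> B0")
    case True thus ?thesis using i by (intro F2.span_base) auto
  next
    case False
    have "{x\<in>B0. insert i (B0 - {x}) \<in> \<B>} \<subseteq> B0 \<inter> K"
      using K i False unfolding E_def by auto
    hence "F2.span (v ` {x\<in>B0. insert i (B0 - {x}) \<in> \<B>}) \<subseteq> F2.span (v ` (B0 \<inter> K))"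
      by (intro F2.span_mono image_mono)
    thus ?thesis using R1[OF B0 False] by blast
  qed
qed

lemma closed_eq:
  assumes K: "\<And>x y. (x,y) \<in> E \<Longrightarrow> y \<in> K \<longleftrightarrow> x \<in> K" and B: "B \<in> \<B>"
  shows "card (B \<inter> K) = card (B0 \<inter> K)"
proof -
  have 1: "card (B \<inter> K) \<le> card (B0 \<inter> K)" using closed_le[OF _ B, of K] K by blast
  have 2: "card (B \<inter> - K) \<le> card (B0 \<inter> - K)" using closed_le[OF _ B, of "- K"] K by blast
  have "card B = card (B \<inter> K) + card (B \<inter> - K)"
    by (metis Diff_eq card_Int_Diff finite)
  moreover have "card B0 = card (B0 \<inter> K) + card (B0 \<inter> - K)"
    by (metis Diff_eq card_Int_Diff finite)
  ultimately show ?thesis using 1 2 card_base[OF B] by linarith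
qed

lemma sum_values:
  fixes S :: "('n::finite) set" and g :: "'n \<Rightarrow> real"
  shows "(\<Sum>i\<in>S. g i) = (\<Sum>c\<in>g ` UNIV. c * real (card (S \<inter> {i. g i = c})))"
proof -
  have "(\<Sum>i\<in>S. g i) = (\<Sum>c\<in>g ` UNIV. (\<Sum>i\<in>{i\<in>S. g i = c}. g i))"
    by (rule sum.group[symmetric]) auto
  also have "\<dots> = (\<Sum>c\<in>g ` UNIV. c * real (card (S \<inter> {i. g i = c})))"
  proof (rule sum.cong[OF refl])
    fix c
    have "(\<Sum>i\<in>{i\<in>S. g i = c}. g i) = (\<Sum>i\<in>{i\<in>S. g i = c}. c)" by (rule sum.cong) auto
    also have "\<dots> = c * real (card (S \<inter> {i. g i = c}))"
    proof -
      have e: "{i\<in>S. g i = c} = S \<inter> {i. g i = c}" by blast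
      show ?thesis unfolding e sum_constant by (rule mult.commute)
    qed
    finally show "(\<Sum>i\<in>{i\<in>S. g i = c}. g i) = c * real (card (S \<inter> {i. g i = c}))" .
  qed
  finally show ?thesis .
qed

lemma fact2:
  assumes B: "B \<in> \<B>"
  shows "indicator_vec B - indicator_vec B0 \<in> span D"
proof (rule ccontr)
  define z where "z = indicator_vec B - indicator_vec B0"
  assume "indicator_vec B - indicator_vec B0 \<notin> span D"
  hence nz: "z \<notin> span D" by (simp add: z_def)
  have "span D \<subset> span (insert z D)"
    using nz span_mono[of D "insert z D"] span_base[of z "insert z D"] by blast
  then obtain f where f: "f \<noteq> 0" "f \<in> span (insert z D)" "\<And>y. y \<in> span D \<Longrightarrow> orthogonal f y"
    using orthogonal_to_subspace_exists_gen by blast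
  obtain k where k: "f - k *\<^sub>R z \<in> span D" using f(2) span_breakdown_eq by blast
  have "f \<bullet> (f - k *\<^sub>R z) = 0" using f(3)[OF k] by (simp add: orthogonal_def)
  hence "f \<bullet> f = k * (f \<bullet> z)" by (simp add: inner_diff_right)
  moreover have "f \<bullet> f \<noteq> 0" using f(1) by simp
  ultimately have fz: "f \<bullet> z \<noteq> 0" by auto
  have fE: "f $ x = f $ y" if "(x,y) \<in> E" for x y
  proof -
    have "dl x y \<in> span D" using that unfolding D_def by (intro span_base) force
    hence "f \<bullet> dl x y = 0" using f(3) by (simp add: orthogonal_def)
    thus ?thesis using inner_dl[OF E_ne[OF that]] by simp
  qed
  define g where "g = (\<lambda>i. f $ i)"
  have "card (B \<inter> {i. g i = c}) = card (B0 \<inter> {i. g i = c})" for c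
    by (rule closed_eq[OF _ B]) (auto simp: g_def dest: fE)
  hence "(\<Sum>i\<in>B. g i) = (\<Sum>i\<in>B0. g i)" by (simp add: sum_values[where g=g])
  hence "f \<bullet> z = 0" by (simp add: z_def inner_diff_right inner_ind g_def)
  with fz show False by simp
qed

lemma aff_le: "aff_dim (base_polytope \<B>) \<le> int (dim D)"
proof -
  have a: "indicator_vec B0 \<in> affine hull (indicator_vec ` \<B>)"
    using B0 by (intro hull_inc) auto
  have "aff_dim (base_polytope \<B>) = aff_dim (indicator_vec ` \<B>)"
    by (simp add: base_polytope_def aff_dim_convex_hull)
  also have "\<dots> = int (dim ((\<lambda>x. x - indicator_vec B0) ` (indicator_vec ` \<B>)))"
    by (rule aff_dim_eq_dim_subtract[OF a])
  also have "\<dots> \<le> int (dim D)"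
  proof -
    have "(\<lambda>x. x - indicator_vec B0) ` (indicator_vec ` \<B>) \<subseteq> span D"
    proof
      fix y assume "y \<in> (\<lambda>x. x - indicator_vec B0) ` (indicator_vec ` \<B>)"
      then obtain B where "B \<in> \<B>" "y = indicator_vec B - indicator_vec B0" by blast
      thus "y \<in> span D" using fact2 by simp
    qed
    from dim_mono[OF this] show ?thesis by simp
  qed
  finally show ?thesis .
qed

lemma D_indep: "independent D"
proof -
  have "card D \<le> dim D" using deg aff_le E_card card_D by linarith
  moreover have "dim D \<le> card D" by (rule dim_le_card') (simp add: D_def)
  ultimately have "card D = dim D" by simp
  moreover have "finite D" by (simp add: D_def)
  ultimately show ?thesis using card_eq_dim[of D D] span_superset[of D] by blast
qed

end



context ctx begin

lemma base_eq: assumes "B \<in> \<B>" "B - B0 = {}" shows "B = B0"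
proof -
  have "B \<subseteq> B0" using assms(2) by auto
  thus ?thesis using card_base[OF assms(1)] by (simp add: card_subset_eq)
qed

lemma leaf:
  assumes B: "B \<in> \<B>" "B \<noteq> B0"
  shows "\<exists>x u. x \<in> B0 - B \<and> u \<in> B - B0 \<and> (x,u) \<in> E \<and> (\<forall>y\<in>B - B0. (x,y) \<in> E \<longrightarrow> y = u)"
proof (rule ccontr)
  assume nl: "\<not> ?thesis"
  define X where "X = B0 - B"
  define Y where "Y = B - B0"
  have cXY: "card X = card Y" unfolding X_def Y_def
    using card_diff_eq[of B0 B] card_base[OF B(1)] by simp
  have "Y \<noteq> {}" using base_eq[OF B(1)] B(2) Y_def by auto
  hence "card Y > 0" by (simp add: card_gt_0_iff)
  hence cX: "card X > 0" using cXY by simp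
  then obtain z0 where z0: "z0 \<in> X" by (metis card.empty ex_in_conv less_irrefl)
  define N where "N x = {y \<in> Y. (x,y) \<in> E}" for x
  have N2: "2 \<le> card (N x)" if x: "x \<in> X" for x
  proof (rule ccontr)
    assume "\<not> 2 \<le> card (N x)"
    hence c1: "card (N x) \<le> 1" by simp
    obtain y where y: "y \<in> B - B0" "insert y (B0 - {x}) \<in> \<B>"
      using mb B0 B(1) x unfolding matroid_bases_def X_def by blast
    have yN: "y \<in> N x" using y x unfolding N_def E_def X_def Y_def by auto
    have "N x = {y}"
    proof -
      have "N x \<noteq> {}" using yN by auto
      hence "card (N x) \<noteq> 0" by simp
      with c1 have "card (N x) = 1" by linarith
      thus ?thesis using yN by (auto simp: card_Suc_eq)
    qed
    hence "(x,y) \<in> E \<and> (\<forall>y'\<in>B - B0. (x,y') \<in> E \<longrightarrow> y' = y)"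
      unfolding N_def Y_def by auto
    thus False using nl x y(1) unfolding X_def by blast
  qed
  define P where "P = Sigma X N"
  have "card P = (\<Sum>x\<in>X. card (N x))" unfolding P_def by (rule card_SigmaI) auto
  also have "\<dots> \<ge> (\<Sum>x\<in>X. 2)" by (rule sum_mono) (use N2 in auto)
  finally have cP: "card P \<ge> 2 * card X" by simp
  have PE: "P \<subseteq> E" unfolding P_def N_def by auto
  define Ds where "Ds = (\<lambda>(x,y). dl x y) ` P"
  have "Ds \<subseteq> D" unfolding Ds_def D_def using PE by auto
  hence iDs: "independent Ds" using D_indep independent_mono by blast
  have cDs: "card Ds = card P" unfolding Ds_def
    using card_image inj_on_subset[OF dl_inj_E PE] by blast
  define Z where "Z = X \<union> Y"
  define G where "G = (\<lambda>z. indicator_vec {z} - indicator_vec {z0}) ` (Z - {z0})"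
  have cZ: "card Z = 2 * card X" unfolding Z_def using cXY
    by (subst card_Un_disjoint) (auto simp: X_def Y_def)
  have "card G \<le> card (Z - {z0})" unfolding G_def by (rule card_image_le) simp
  also have "\<dots> = card Z - 1" using z0 by (simp add: Z_def card_Diff_singleton)
  finally have cG: "card G \<le> 2 * card X - 1" using cZ by simp
  have hz: "indicator_vec {z} - indicator_vec {z0} \<in> span G" if "z \<in> Z" for z
  proof (cases "z = z0")
    case True thus ?thesis by (simp add: span_zero)
  next
    case False thus ?thesis using that unfolding G_def by (intro span_base) auto
  qed
  have "Ds \<subseteq> span G"
  proof
    fix d assume "d \<in> Ds"
    then obtain x y where xy: "(x,y) \<in> P" "d = dl x y" unfolding Ds_def by auto
    have "x \<in> Z" "y \<in> Z" using xy(1) unfolding P_def N_def Z_def by auto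
    hence "(indicator_vec {y} - indicator_vec {z0}) - (indicator_vec {x} - indicator_vec {z0}) \<in> span G"
      using hz span_diff by blast
    thus "d \<in> span G" using xy(2) by (simp add: dl_def)
  qed
  hence "card Ds \<le> card G" using independent_span_bound[OF _ iDs] by (simp add: G_def)
  hence c1: "2 * card X \<le> card G" using cP cDs by simp
  have "2 * card X - 1 < 2 * card X" using cX by simp
  with c1 cG show False by simp
qed

lemma Rl:
  assumes B: "B \<in> \<B>" and x: "x \<in> B0 - B" and u: "u \<in> B - B0"
    and lf: "\<forall>y\<in>B - B0. (x,y) \<in> E \<longrightarrow> y = u"
    and y: "y \<in> B0 - B" "y \<noteq> x"
  shows "insert y (B - {u}) \<notin> \<B>"
proof
  assume S: "insert y (B - {u}) \<in> \<B>"
  have "card (insert y (B - {u})) \<le> card (B0 - {x})"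
  proof (rule span_bound)
    show "indep_F2 v (insert y (B - {u}))" using base_indep[OF S] .
  next
    fix i assume i: "i \<in> insert y (B - {u})"
    show "v i \<in> F2.span (v ` (B0 - {x}))"
    proof (cases "i \<in> B0")
      case True
      hence "i \<in> B0 - {x}" using i x y by auto
      thus ?thesis by (intro F2.span_base) auto
    next
      case False
      hence iB: "i \<in> B - B0" "i \<noteq> u" using i y by auto
      have "{x'\<in>B0. insert i (B0 - {x'}) \<in> \<B>} \<subseteq> B0 - {x}"
        using lf iB False unfolding E_def by auto
      hence "F2.span (v ` {x'\<in>B0. insert i (B0 - {x'}) \<in> \<B>}) \<subseteq> F2.span (v ` (B0 - {x}))"
        by (intro F2.span_mono image_mono)
      thus ?thesis using R1[OF B0 False] by blast
    qed
  qed
  moreover have "card (insert y (B - {u})) = card B" using u y by (intro card_swap) auto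
  moreover have "card (B0 - {x}) = card B0 - 1" using x by (simp add: card_Diff_singleton)
  moreover have "card B0 > 0"
  proof -
    have "B0 \<noteq> {}" using x by auto
    thus ?thesis by (subst card_gt_0_iff) simp
  qed
  ultimately show False using card_base[OF B] by linarith
qed

end



context ctx begin

lemma lemC:
  assumes M1: "matroid_bases M1" "M1 \<subseteq> \<B>" "B0 \<in> M1"
  shows "B \<in> M1 \<Longrightarrow> indicator_vec B - indicator_vec B0
           \<in> span ((\<lambda>(x,y). dl x y) ` {(x,y)\<in>E. insert y (B0 - {x}) \<in> M1})"
proof (induction "card (B - B0)" arbitrary: B)
  case 0
  hence "B - B0 = {}" by simp
  hence "B = B0" using base_eq 0(2) M1(2) by blast
  thus ?case by (simp add: span_zero)
next
  case (Suc n)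
  let ?T = "(\<lambda>(x,y). dl x y) ` {(x,y)\<in>E. insert y (B0 - {x}) \<in> M1}"
  have BB: "B \<in> \<B>" using Suc.prems M1(2) by blast
  have "B - B0 \<noteq> {}" using Suc.hyps(2) by (metis card.empty Zero_not_Suc)
  hence "B \<noteq> B0" by blast
  then obtain x u where x: "x \<in> B0 - B" and u: "u \<in> B - B0" and xu: "(x,u) \<in> E"
     and lf: "\<forall>y\<in>B - B0. (x,y) \<in> E \<longrightarrow> y = u"
    using leaf[OF BB] by blast
  obtain y where y: "y \<in> B - B0" "insert y (B0 - {x}) \<in> M1"
    using M1(1) M1(3) Suc.prems x unfolding matroid_bases_def by blast
  have "(x,y) \<in> E" using y x M1(2) unfolding E_def by blast
  hence "y = u" using lf y(1) by blast
  hence xuM: "insert u (B0 - {x}) \<in> M1" using y(2) by simp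
  obtain y' where y': "y' \<in> B0 - B" "insert y' (B - {u}) \<in> M1"
    using M1(1) Suc.prems M1(3) u unfolding matroid_bases_def by blast
  have "y' = x"
  proof (rule ccontr)
    assume "y' \<noteq> x"
    hence "insert y' (B - {u}) \<notin> \<B>" using Rl[OF BB x u lf] y'(1) by blast
    thus False using y'(2) M1(2) by blast
  qed
  hence B'M: "insert x (B - {u}) \<in> M1" using y'(2) by simp
  have "insert x (B - {u}) - B0 = (B - B0) - {u}" using x by auto
  hence "card (insert x (B - {u}) - B0) = card (B - B0) - 1" using u by (simp add: card_Diff_singleton)
  hence "n = card (insert x (B - {u}) - B0)" using Suc.hyps(2) by simp
  hence IH: "indicator_vec (insert x (B - {u})) - indicator_vec B0 \<in> span ?T"
    using Suc.hyps(1) B'M by blast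
  have Beq: "insert u (insert x (B - {u}) - {x}) = B" using x u by auto
  have "indicator_vec (insert u (insert x (B - {u}) - {x})) = indicator_vec (insert x (B - {u})) + dl x u"
    by (rule ind_swap) (use x u in auto)
  hence eqB: "indicator_vec B = indicator_vec (insert x (B - {u})) + dl x u" by (simp only: Beq)
  have "dl x u \<in> span ?T"
  proof (rule span_base)
    have "(x,u) \<in> {(x,y)\<in>E. insert y (B0 - {x}) \<in> M1}" using xu xuM by simp
    thus "dl x u \<in> ?T" by (rule image_eqI[rotated]) simp
  qed
  hence "(indicator_vec (insert x (B - {u})) - indicator_vec B0) + dl x u \<in> span ?T"
    using IH span_add by blast
  moreover have "(indicator_vec (insert x (B - {u})) - indicator_vec B0) + dl x u
     = indicator_vec B - indicator_vec B0" unfolding eqB by (simp add: algebra_simps)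
  ultimately show ?case by simp
qed

lemma core:
  assumes M1: "matroid_bases M1" "M1 \<subseteq> \<B>" "B0 \<in> M1"
    and all: "\<And>x y. (x,y) \<in> E \<Longrightarrow> insert y (B0 - {x}) \<in> M1"
  shows "B \<in> \<B> \<Longrightarrow> B \<in> M1"
proof (induction "card (B - B0)" arbitrary: B)
  case 0
  hence "B - B0 = {}" by simp
  hence "B = B0" using base_eq 0(2) by blast
  thus ?case using M1(3) by simp
next
  case (Suc n)
  have BB: "B \<in> \<B>" by fact
  have "B - B0 \<noteq> {}" using Suc.hyps(2) by (metis card.empty Zero_not_Suc)
  hence "B \<noteq> B0" by blast
  then obtain x u where x: "x \<in> B0 - B" and u: "u \<in> B - B0" and xu: "(x,u) \<in> E"
     and lf: "\<forall>y\<in>B - B0. (x,y) \<in> E \<longrightarrow> y = u"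
    using leaf[OF BB] by blast
  obtain y' where y': "y' \<in> B0 - B" "insert y' (B - {u}) \<in> \<B>"
    using mb BB B0 u unfolding matroid_bases_def by blast
  have "y' = x"
  proof (rule ccontr)
    assume "y' \<noteq> x"
    thus False using Rl[OF BB x u lf] y' by blast
  qed
  hence B'B: "insert x (B - {u}) \<in> \<B>" using y'(2) by simp
  have "insert x (B - {u}) - B0 = (B - B0) - {u}" using x by auto
  hence "card (insert x (B - {u}) - B0) = card (B - B0) - 1" using u by (simp add: card_Diff_singleton)
  hence "n = card (insert x (B - {u}) - B0)" using Suc.hyps(2) by simp
  hence IH: "insert x (B - {u}) \<in> M1" using Suc.hyps(1) B'B by blast
  have B2: "insert u (B0 - {x}) \<in> M1" using all xu by blast
  have xin: "x \<in> insert x (B - {u}) - insert u (B0 - {x})" using x u by auto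
  obtain y where y: "y \<in> insert u (B0 - {x}) - insert x (B - {u})"
      "insert y (insert x (B - {u}) - {x}) \<in> M1"
    using M1(1) IH B2 xin unfolding matroid_bases_def by blast
  have e: "insert x (B - {u}) - {x} = B - {u}" using x by auto
  show ?case
  proof (cases "y = u")
    case True
    have "insert u (B - {u}) = B" using u by auto
    thus ?thesis using y(2) True e by simp
  next
    case False
    have yB: "y \<in> B0 - B" "y \<noteq> x" using y False by auto
    have "insert y (B - {u}) \<notin> \<B>" by (rule Rl[OF BB x u lf yB])
    moreover have "insert y (B - {u}) \<in> M1" using y(2) e by simp
    ultimately show ?thesis using M1(2) by blast
  qed
qed

end



context ctx begin

lemma sub_bases:
  assumes "base_polytope M1 \<subseteq> base_polytope \<B>"
  shows "M1 \<subseteq> \<B>"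
proof
  fix B assume "B \<in> M1"
  hence "indicator_vec B \<in> base_polytope M1" unfolding base_polytope_def by (intro hull_inc) simp
  hence "indicator_vec B \<in> convex hull (indicator_vec ` \<B>)" using assms unfolding base_polytope_def by blast
  thus "B \<in> \<B>" by (rule ind_in_hull)
qed

definition w where "w = (\<Sum>e\<in>E. (\<lambda>(x,y). dl x y) e)"

lemma point_in:
  assumes s: "0 \<le> s" "s * real (card E) \<le> 1"
  shows "indicator_vec B0 + s *\<^sub>R w \<in> base_polytope \<B>"
proof (cases "E = {}")
  case True
  hence "w = 0" by (simp add: w_def)
  thus ?thesis using B0 unfolding base_polytope_def by (simp add: hull_inc)
next
  case False
  let ?v0 = "indicator_vec B0"
  let ?n = "real (card E)"
  have "card E > 0" using False by (subst card_gt_0_iff) simp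
  hence n: "?n > 0" by simp
  define q where "q = (\<Sum>e\<in>E. (1 / ?n) *\<^sub>R indicator_vec ((\<lambda>(x,y). insert y (B0 - {x})) e))"
  have cvx: "convex (base_polytope \<B>)" unfolding base_polytope_def by simp
  have qin: "q \<in> base_polytope \<B>"
    unfolding q_def
  proof (rule convex_sum[OF _ cvx])
    show "sum (\<lambda>e. 1 / ?n) E = 1" using n False by simp
  next
    fix e assume "e \<in> E"
    then obtain x y where "e = (x,y)" "insert y (B0 - {x}) \<in> \<B>" unfolding E_def by auto
    thus "indicator_vec ((\<lambda>(x,y). insert y (B0 - {x})) e) \<in> base_polytope \<B>"
      unfolding base_polytope_def by (simp add: hull_inc)
  qed auto
  have "q = (\<Sum>e\<in>E. (1 / ?n) *\<^sub>R (?v0 + (\<lambda>(x,y). dl x y) e))"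
    unfolding q_def
  proof (rule sum.cong[OF refl])
    fix e assume "e \<in> E"
    then obtain x y where e: "e = (x,y)" "x \<in> B0" "y \<notin> B0" unfolding E_def by auto
    show "(1 / ?n) *\<^sub>R indicator_vec ((\<lambda>(x,y). insert y (B0 - {x})) e) = (1 / ?n) *\<^sub>R (?v0 + (\<lambda>(x,y). dl x y) e)"
      using ind_swap[OF e(2,3)] e(1) by simp
  qed
  also have "\<dots> = (\<Sum>e\<in>E. (1 / ?n) *\<^sub>R ?v0) + (1 / ?n) *\<^sub>R w"
    by (simp add: scaleR_add_right sum.distrib w_def scaleR_sum_right)
  also have "(\<Sum>e\<in>E. (1 / ?n) *\<^sub>R ?v0) = ?v0"
  proof -
    have "(\<Sum>e\<in>E. (1 / ?n) *\<^sub>R ?v0) = (?n * (1 / ?n)) *\<^sub>R ?v0"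
      by (simp only: sum_constant_scaleR scaleR_scaleR)
    also have "?n * (1 / ?n) = 1" using False by simp
    finally show ?thesis by simp
  qed
  finally have qeq: "q = ?v0 + (1 / ?n) *\<^sub>R w" .
  define a where "a = s * ?n"
  have a: "0 \<le> a" "a \<le> 1" using s n by (auto simp: a_def)
  have "(1 - a) *\<^sub>R ?v0 + a *\<^sub>R q \<in> base_polytope \<B>"
    using cvx qin B0 a unfolding convex_def base_polytope_def
    by (metis (no_types, lifting) diff_add_cancel diff_ge_0_iff_ge hull_inc imageI)
  moreover have "(1 - a) *\<^sub>R ?v0 + a *\<^sub>R q = ?v0 + s *\<^sub>R w"
    using n False unfolding qeq a_def by (simp add: algebra_simps)
  ultimately show ?thesis by simp
qed

lemma main_ctx:
  assumes dec: "is_mbp_decomposition \<B> t Ms"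
    and ne: "\<forall>i<t. base_polytope (Ms i) \<noteq> base_polytope \<B>"
  shows False
proof -
  let ?v0 = "indicator_vec B0"
  let ?P = "base_polytope \<B>"
  have mbs: "\<And>i. i < t \<Longrightarrow> matroid_bases (Ms i)" using dec unfolding is_mbp_decomposition_def by blast
  have un: "?P = (\<Union>i<t. base_polytope (Ms i))" using dec unfolding is_mbp_decomposition_def by blast
  define I where "I = {i. i < t \<and> ?v0 \<notin> base_polytope (Ms i)}"
  define U where "U = (\<Union>i\<in>I. base_polytope (Ms i))"
  have "compact U" unfolding U_def base_polytope_def
    by (intro compact_UN compact_convex_hull finite_imp_compact) (auto simp: I_def)
  hence "closed U" by (rule compact_imp_closed)
  moreover have "?v0 \<notin> U" unfolding U_def I_def by blast
  ultimately obtain d where d: "d > 0" "\<And>x. x \<in> U \<Longrightarrow> d \<le> dist ?v0 x"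
    using separate_point_closed by metis
  define s where "s = min (1 / (real (card E) + 1)) (d / (norm w + 1))"
  have nw: "norm w + 1 > 0" using norm_ge_zero[of w] by linarith
  hence "d / (norm w + 1) > 0" using d(1) by (rule divide_pos_pos[rotated])
  hence s0: "s > 0" by (simp add: s_def)
  have s1: "s * real (card E) \<le> 1"
  proof -
    have "s \<le> 1 / (real (card E) + 1)" by (simp add: s_def)
    hence "s * (real (card E) + 1) \<le> 1" by (simp add: field_simps)
    thus ?thesis using s0 by (simp add: algebra_simps)
  qed
  define p where "p = ?v0 + s *\<^sub>R w"
  have pP: "p \<in> ?P" unfolding p_def using point_in s0 s1 by simp
  have "dist ?v0 p = s * norm w" unfolding p_def using s0 by (simp add: dist_norm)
  also have "\<dots> < d"
  proof -
    have "s \<le> d / (norm w + 1)" by (simp add: s_def)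
    hence "s * (norm w + 1) \<le> d" by (simp only: pos_le_divide_eq[OF nw])
    thus ?thesis using s0 by (simp add: algebra_simps)
  qed
  finally have "p \<notin> U" using d(2) by force
  then obtain i where i: "i < t" "p \<in> base_polytope (Ms i)" "i \<notin> I"
    using pP un unfolding U_def by blast
  have v0i: "?v0 \<in> base_polytope (Ms i)" using i unfolding I_def by blast
  define M1 where "M1 = Ms i"
  have M1m: "matroid_bases M1" using mbs i(1) by (simp add: M1_def)
  have "base_polytope M1 \<subseteq> ?P" using un i(1) unfolding M1_def by blast
  hence M1sub: "M1 \<subseteq> \<B>" by (rule sub_bases)
  have B0M1: "B0 \<in> M1" using v0i unfolding M1_def base_polytope_def by (rule ind_in_hull)
  define T where "T = (\<lambda>(x,y). dl x y) ` {(x,y)\<in>E. insert y (B0 - {x}) \<in> M1}"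
  have "p \<in> affine hull (indicator_vec ` M1)"
    using i(2) convex_hull_subset_affine_hull unfolding M1_def base_polytope_def by blast
  moreover have "?v0 \<in> affine hull (indicator_vec ` M1)"
    using B0M1 by (intro hull_inc) simp
  ultimately have "p \<in> (+) ?v0 ` span ((+) (- ?v0) ` (indicator_vec ` M1))"
    using affine_hull_span_gen by blast
  then obtain z where z: "z \<in> span ((+) (- ?v0) ` (indicator_vec ` M1))" "p = ?v0 + z" by blast
  have "(+) (- ?v0) ` (indicator_vec ` M1) \<subseteq> span T"
  proof
    fix y assume "y \<in> (+) (- ?v0) ` (indicator_vec ` M1)"
    then obtain B where B: "B \<in> M1" "y = - ?v0 + indicator_vec B" by blast
    have "indicator_vec B - ?v0 \<in> span T" unfolding T_def by (rule lemC[OF M1m M1sub B0M1 B(1)])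
    moreover have "y = indicator_vec B - ?v0" using B(2) by (metis add.commute diff_conv_add_uminus)
    ultimately show "y \<in> span T" by simp
  qed
  hence "span ((+) (- ?v0) ` (indicator_vec ` M1)) \<subseteq> span T"
    by (rule span_minimal) (rule subspace_span)
  hence "z \<in> span T" using z(1) by blast
  moreover have "z = s *\<^sub>R w" using z(2) unfolding p_def by simp
  ultimately have "s *\<^sub>R w \<in> span T" by simp
  hence "(1 / s) *\<^sub>R (s *\<^sub>R w) \<in> span T" by (rule span_mul)
  hence wT: "w \<in> span T" using s0 by simp
  have allE: "insert y (B0 - {x}) \<in> M1" if xy: "(x,y) \<in> E" for x y
  proof (rule ccontr)
    assume nM: "insert y (B0 - {x}) \<notin> M1"
    let ?a = "dl x y"
    have TD: "T \<subseteq> D - {?a}"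
    proof
      fix d assume "d \<in> T"
      then obtain x' y' where e: "(x',y') \<in> E" "insert y' (B0 - {x'}) \<in> M1" "d = dl x' y'"
        unfolding T_def by auto
      have "(x',y') \<noteq> (x,y)" using e(2) nM by auto
      hence "d \<noteq> ?a" using e(3) dl_inj[OF E_ne[OF e(1)] E_ne[OF xy]] by auto
      moreover have "d \<in> D" using e(1,3) unfolding D_def by (auto intro: image_eqI[where x="(x',y')"])
      ultimately show "d \<in> D - {?a}" by simp
    qed
    have "w = ?a + (\<Sum>e\<in>E - {(x,y)}. (\<lambda>(x,y). dl x y) e)"
      unfolding w_def using xy by (simp add: sum.remove)
    moreover have "(\<Sum>e\<in>E - {(x,y)}. (\<lambda>(x,y). dl x y) e) \<in> span (D - {?a})"
    proof (rule span_sum)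
      fix e assume e: "e \<in> E - {(x,y)}"
      obtain x' y' where e': "e = (x',y')" by (cases e)
      have "dl x' y' \<noteq> ?a" using e e' dl_inj[OF E_ne E_ne[OF xy], of x' y'] by auto
      moreover have "dl x' y' \<in> D" using e e' unfolding D_def by (auto intro: image_eqI[where x="(x',y')"])
      ultimately show "(\<lambda>(x,y). dl x y) e \<in> span (D - {?a})" using e' by (simp add: span_base)
    qed
    moreover have "w \<in> span (D - {?a})" using wT span_mono[OF TD] by blast
    ultimately have "?a \<in> span (D - {?a})"
      by (metis add_diff_cancel_right' span_diff)
    moreover have "?a \<in> D" using xy unfolding D_def by (auto intro: image_eqI[where x="(x,y)"])
    ultimately have "dependent D" unfolding dependent_def by blast
    thus False using D_indep by simp
  qed
  have "\<B> \<subseteq> M1" using core[OF M1m M1sub B0M1] allE by blast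
  hence "M1 = \<B>" using M1sub by blast
  thus False using ne i(1) unfolding M1_def by blast
qed

end

theorem corollary6:
  fixes \<B> :: "('n::finite) set set"
  assumes "binary_matroid \<B>"
    and "\<exists>B\<in>\<B>. int (card (base_graph_nbrs \<B> B)) = aff_dim (base_polytope \<B>)"
  shows "\<not> decomposable \<B>"
proof
  assume "decomposable \<B>"
  then obtain t Ms where dec: "is_mbp_decomposition \<B> t Ms"
    and ne: "\<forall>i<t. base_polytope (Ms i) \<noteq> base_polytope \<B>"
    unfolding decomposable_def by blast
  from assms(1) obtain v where mb: "matroid_bases \<B>"
    and rep: "\<forall>B. B \<in> \<B> \<longleftrightarrow> indep_F2 v B \<and> (\<forall>J. B \<subset> J \<longrightarrow> \<not> indep_F2 v J)"
    unfolding binary_matroid_def by blast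
  from assms(2) obtain B0 where B0: "B0 \<in> \<B>"
    and deg: "int (card (base_graph_nbrs \<B> B0)) = aff_dim (base_polytope \<B>)" by blast
  interpret ctx \<B> v B0
    by unfold_locales (use mb rep B0 deg in auto)
  show False by (rule main_ctx[OF dec ne])
qed


end
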